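(* Let $N\in\mathbb N$ or $N=-1$. There is a constant $C_1$ depending only on $\Gamma$ such that for any two distinct points $\tau_1,\tau_2\in\Gamma$ with $|1-\tau_1^2|\le|1-\tau_2^2|$, $$\Big|\frac1{\mathrm w^N(\tau_1)}-\frac1{\mathrm w^N(\tau_2)}\Big|\le C_1|N|\max\Big\{\frac1{|1-\tau_1^2|^{1+N/2}},\frac1{|1-\tau_2^2|^{1+N/2}}\Big\}|\tau_1-\tau_2|.$$
   Context: $\Delta$ is a closed analytic Jordan arc with endpoints $\pm1$, oriented from $-1$ to $1$. $\Gamma$ is an infinitely smooth Jordan curve containing $\Delta$ whose interior domain $\Omega$ lies to the left of $\Delta$. $\mathrm w(z)=\sqrt{z^2-1}$ is the branch holomorphic in $\overline{\mathbb C}\setminus\Delta$ with $\mathrm w(z)/z\to1$ at $\infty$; on $\Gamma$, $\mathrm w$ denotes its boundary values from within $\Omega$ (on $\Delta$ these are the boundary values from the left side). *)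

theory Defs
  imports "HOL-Complex_Analysis.Complex_Analysis"
begin

fun vderivs :: "nat \<Rightarrow> (real \<Rightarrow> complex) \<Rightarrow> real \<Rightarrow> complex" where
  "vderivs 0 g = g"
| "vderivs (Suc k) g = (\<lambda>t. vector_derivative (vderivs k g) (at t))"

definition analytic_arc_param :: "(complex \<Rightarrow> complex) \<Rightarrow> complex \<Rightarrow> complex \<Rightarrow> bool" where
  "analytic_arc_param f a b \<longleftrightarrow>
     (\<exists>S. open S \<and> complex_of_real ` {0..1} \<subseteq> S \<and> f holomorphic_on S) \<and>
     inj_on f (complex_of_real ` {0..1}) \<and>
     (\<forall>t\<in>{0..1::real}. deriv f (complex_of_real t) \<noteq> 0) \<and>
     f 0 = a \<and> f 1 = b"

definition smooth_jordan_param :: "(real \<Rightarrow> complex) \<Rightarrow> bool" where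
  "smooth_jordan_param g \<longleftrightarrow>
     (\<forall>t. g (t + 1) = g t) \<and>
     (\<forall>k t. vderivs k g differentiable (at t)) \<and>
     (\<forall>t. vector_derivative g (at t) \<noteq> 0) \<and>
     inj_on g {0..<1}"

definition lies_left_of_arc :: "complex set \<Rightarrow> (complex \<Rightarrow> complex) \<Rightarrow> bool" where
  "lies_left_of_arc U f \<longleftrightarrow>
     (\<forall>t\<in>{0<..<1::real}. \<exists>\<delta>>0. \<forall>\<epsilon>. 0 < \<epsilon> \<and> \<epsilon> < \<delta> \<longrightarrow>
        f (complex_of_real t) + \<i> * complex_of_real \<epsilon> * deriv f (complex_of_real t) \<in> U)"

end

theory Submission
  imports Defs
begin

lemma sj_basic:
  assumes "smooth_jordan_param g"
  shows "\<And>t. (g has_vector_derivative vector_derivative g (at t)) (at t)"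
    and "\<And>t. ((\<lambda>t. vector_derivative g (at t)) has_vector_derivative
               vector_derivative (\<lambda>t. vector_derivative g (at t)) (at t)) (at t)"
    and "continuous_on UNIV (\<lambda>t. vector_derivative (\<lambda>t. vector_derivative g (at t)) (at t))"
    and "continuous_on UNIV (\<lambda>t. vector_derivative g (at t))"
    and "continuous_on UNIV g"
    and "\<And>t. g (t + 1) = g t" "\<And>t. g (t - 1) = g t"
    and "\<And>t. vector_derivative g (at t) \<noteq> 0"
    and "inj_on g {0..<1}"
proof -
  have d: "\<And>k t. vderivs k g differentiable (at t)" using assms by (simp add: smooth_jordan_param_def)
  have d0: "\<And>t. g differentiable (at t)" using d[of 0] by simp
  have d1: "\<And>t. (\<lambda>t. vector_derivative g (at t)) differentiable (at t)" using d[of 1] by simp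
  have d2: "\<And>t. (\<lambda>t. vector_derivative (\<lambda>t. vector_derivative g (at t)) (at t)) differentiable (at t)"
    using d[of 2] by (simp add: numeral_2_eq_2)
  show "\<And>t. (g has_vector_derivative vector_derivative g (at t)) (at t)"
    using d0 vector_derivative_works by blast
  show "\<And>t. ((\<lambda>t. vector_derivative g (at t)) has_vector_derivative
               vector_derivative (\<lambda>t. vector_derivative g (at t)) (at t)) (at t)"
    using d1 vector_derivative_works by blast
  show "continuous_on UNIV (\<lambda>t. vector_derivative (\<lambda>t. vector_derivative g (at t)) (at t))"
    using d2 by (simp add: continuous_at_imp_continuous_on differentiable_imp_continuous_within)
  show "continuous_on UNIV (\<lambda>t. vector_derivative g (at t))"
    using d1 by (simp add: continuous_at_imp_continuous_on differentiable_imp_continuous_within)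
  show "continuous_on UNIV g"
    using d0 by (simp add: continuous_at_imp_continuous_on differentiable_imp_continuous_within)
  show p: "\<And>t. g (t + 1) = g t" using assms by (simp add: smooth_jordan_param_def)
  show "\<And>t. g (t - 1) = g t" by (metis p diff_add_cancel)
  show "\<And>t. vector_derivative g (at t) \<noteq> 0" "inj_on g {0..<1}" using assms by (auto simp add: smooth_jordan_param_def)
qed

lemma sj_per_nat:
  assumes "smooth_jordan_param g"
  shows "g (x + real n) = g x \<and> g (x - real n) = g x"
proof (induction n arbitrary: x)
  case 0 then show ?case by simp
next
  case (Suc n)
  have p1: "\<And>t. g (t + 1) = g t" "\<And>t. g (t - 1) = g t" using sj_basic[OF assms] by auto
  have "g (x + real (Suc n)) = g ((x + real n) + 1)" by (simp add: algebra_simps)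
  also have "\<dots> = g x" using p1 Suc by simp
  moreover have "g (x - real (Suc n)) = g ((x - real n) - 1)" by (simp add: algebra_simps)
  moreover have "\<dots> = g x" using p1 Suc by simp
  ultimately show ?case by simp
qed

lemma sj_per_int:
  assumes "smooth_jordan_param g"
  shows "g (x + real_of_int n) = g x"
proof (cases "n \<ge> 0")
  case True
  define k where "k = nat n"
  have "n = int k" using True by (simp add: k_def)
  then show ?thesis using sj_per_nat[OF assms] by simp
next
  case False
  define k where "k = nat (- n)"
  have "n = - int k" using False by (simp add: k_def)
  then show ?thesis using sj_per_nat[OF assms, of x k] by simp
qed

lemma sj_frac:
  assumes "smooth_jordan_param g"
  shows "g x = g (frac x)"
  using sj_per_int[OF assms, of "frac x" "\<lfloor>x\<rfloor>"] by (simp add: frac_def)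

lemma sj_inj:
  assumes "smooth_jordan_param g" "g s = g t" "0 < \<bar>s - t\<bar>" "\<bar>s - t\<bar> < 1"
  shows False
proof -
  have inj: "inj_on g {0..<1}" using sj_basic[OF assms(1)] by auto
  have "g (frac s) = g (frac t)" using assms sj_frac by metis
  then have "frac s = frac t" using inj_onD[OF inj, of "frac s" "frac t"] frac_lt_1[of s] frac_lt_1[of t] by simp
  then have "s - t = of_int (\<lfloor>s\<rfloor> - \<lfloor>t\<rfloor>)" by (simp add: frac_def)
  moreover obtain k where "k = \<lfloor>s\<rfloor> - \<lfloor>t\<rfloor>" by blast
  ultimately have "\<bar>real_of_int k\<bar> < 1" "0 < \<bar>real_of_int k\<bar>" using assms by auto
  then have kk: "\<bar>real_of_int k\<bar> < 1" "k \<noteq> 0" by auto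
  then have "\<bar>k\<bar> \<ge> 1" by arith
  then have "real_of_int \<bar>k\<bar> \<ge> 1" by simp
  then have "\<bar>real_of_int k\<bar> \<ge> 1" by simp
  then show False using kk by linarith
qed

lemma sj_image:
  assumes "smooth_jordan_param g"
  shows "g ` UNIV = g ` {0..1}"
proof
  show "g ` UNIV \<subseteq> g ` {0..1}"
  proof
    fix y assume "y \<in> g ` UNIV"
    then obtain x where "y = g x" by auto
    then have "y = g (frac x)" using sj_frac[OF assms] by simp
    moreover have "frac x \<in> {0..1}" using frac_lt_1[of x] by auto
    ultimately show "y \<in> g ` {0..1}" by blast
  qed
qed auto

lemma sj_bilip:
  assumes sj: "smooth_jordan_param g"
  shows "\<exists>\<kappa>>0. \<exists>M>0. (\<forall>s t. s \<in> {-1..2} \<longrightarrow> t \<in> {-1..2} \<longrightarrow> norm (g s - g t) \<le> M * \<bar>s - t\<bar>) \<and>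
           (\<forall>s\<in>{0..1}. \<forall>t. \<bar>s - t\<bar> \<le> 1/2 \<longrightarrow> \<kappa> * \<bar>s - t\<bar> \<le> norm (g s - g t))"
proof -
  define G1 where "G1 = (\<lambda>t. vector_derivative g (at t))"
  have gd: "\<And>t. (g has_vector_derivative G1 t) (at t)" using sj_basic[OF sj] G1_def by auto
  have cG1: "continuous_on UNIV G1" using sj_basic[OF sj] G1_def by auto
  have nz: "\<And>t. G1 t \<noteq> 0" using sj_basic[OF sj] G1_def by auto
  define I where "I = {-1..2::real}"
  have cI: "compact I" "I \<noteq> {}" "convex I" by (auto simp: I_def)
  have cG1I: "continuous_on I (\<lambda>t. norm (G1 t))" by (intro continuous_intros continuous_on_subset[OF cG1]) auto
  obtain x1 where x1: "x1 \<in> I" "\<And>y. y \<in> I \<Longrightarrow> norm (G1 x1) \<le> norm (G1 y)"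
    using continuous_attains_inf[OF cI(1,2) cG1I] by blast
  obtain x2 where x2: "x2 \<in> I" "\<And>y. y \<in> I \<Longrightarrow> norm (G1 y) \<le> norm (G1 x2)"
    using continuous_attains_sup[OF cI(1,2) cG1I] by blast
  define m where "m = norm (G1 x1)"
  define M0 where "M0 = norm (G1 x2)"
  have m0: "m > 0" using nz m_def by auto
  have gdI: "\<And>x. (g has_vector_derivative G1 x) (at x within I)"
    using gd has_vector_derivative_at_within by blast
  have up: "norm (g s - g t) \<le> (3*M0+1) * \<bar>s - t\<bar>" if "s \<in> I" "t \<in> I" for s t
  proof -
    have seg: "closed_segment t s \<subseteq> I" using that cI(3) closed_segment_subset by blast
    have n1: "norm (g s - g t - (s - t) *\<^sub>R G1 t) \<le> norm (s - t) * (2*M0)"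
    proof (rule vector_differentiable_bound_linearization[OF gdI seg _ that(2)])
      fix x assume "x \<in> I"
      then show "norm (G1 x - G1 t) \<le> 2 * M0"
        using x2(2)[of x] x2(2)[of t] that norm_triangle_ineq4[of "G1 x" "G1 t"] M0_def by linarith
    qed
    have n2: "norm ((s - t) *\<^sub>R G1 t) \<le> \<bar>s - t\<bar> * M0" using x2(2)[OF that(2)] M0_def
      by (simp add: mult_left_mono)
    have e: "g s - g t = (g s - g t - (s - t) *\<^sub>R G1 t) + (s - t) *\<^sub>R G1 t" by simp
    have n3: "norm (g s - g t) \<le> norm (g s - g t - (s - t) *\<^sub>R G1 t) + norm ((s - t) *\<^sub>R G1 t)"
      by (subst e) (rule norm_triangle_ineq)
    have "norm (g s - g t) \<le> \<bar>s - t\<bar> * (2*M0) + \<bar>s - t\<bar> * M0"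
      using n1[unfolded real_norm_def] n2 n3 by linarith
    also have "\<dots> \<le> (3*M0+1) * \<bar>s - t\<bar>" by (simp add: algebra_simps)
    finally show ?thesis .
  qed
  have ucI: "uniformly_continuous_on I G1"
    using compact_uniformly_continuous[OF continuous_on_subset[OF cG1] cI(1)] by simp
  obtain \<eta> where \<eta>: "\<eta> > 0" "\<And>x y. x \<in> I \<Longrightarrow> y \<in> I \<Longrightarrow> dist y x < \<eta> \<Longrightarrow> dist (G1 y) (G1 x) < m/2"
    using ucI m0 unfolding uniformly_continuous_on_def by (metis half_gt_zero)
  have loc: "m/2 * \<bar>s - t\<bar> \<le> norm (g s - g t)" if "s \<in> I" "t \<in> I" "\<bar>s - t\<bar> < \<eta>" for s t
  proof -
    have seg: "closed_segment t s \<subseteq> closed_segment t s" by simp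
    have n1: "norm (g s - g t - (s - t) *\<^sub>R G1 t) \<le> norm (s - t) * (m/2)"
    proof (rule vector_differentiable_bound_linearization[of "closed_segment t s", OF _ seg])
      fix x assume x: "x \<in> closed_segment t s"
      show "(g has_vector_derivative G1 x) (at x within closed_segment t s)"
        using gd has_vector_derivative_at_within by blast
      have xI: "x \<in> I" using x that cI(3) closed_segment_subset by blast
      have "dist x t \<le> dist s t" using segment_bound1[OF x] by (simp add: dist_norm)
      then have "dist x t < \<eta>" using that by (simp add: dist_real_def)
      then show "norm (G1 x - G1 t) \<le> m/2" using \<eta>(2)[OF that(2) xI] by (simp add: dist_norm)
    qed auto
    have n2: "norm ((s - t) *\<^sub>R G1 t) \<ge> \<bar>s - t\<bar> * m" using x1(2)[OF that(2)] m_def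
      by (simp add: mult_left_mono)
    have e: "(g s - g t) - (g s - g t - (s - t) *\<^sub>R G1 t) = (s - t) *\<^sub>R G1 t" by simp
    have n3: "norm ((s - t) *\<^sub>R G1 t) \<le> norm (g s - g t) + norm (g s - g t - (s - t) *\<^sub>R G1 t)"
      using norm_triangle_ineq4[of "g s - g t" "g s - g t - (s - t) *\<^sub>R G1 t"] unfolding e .
    have "\<bar>s - t\<bar> * (m/2) = m/2 * \<bar>s - t\<bar>" "\<bar>s - t\<bar> * m = 2 * (m/2 * \<bar>s - t\<bar>)" by simp_all
    then show ?thesis using n1[unfolded real_norm_def] n2 n3 by linarith
  qed
  define \<eta>' where "\<eta>' = min (\<eta>/2) (1/4)"
  have \<eta>': "\<eta>' > 0" "\<eta>' < \<eta>" "\<eta>' \<le> 1/2" using \<eta> by (auto simp: \<eta>'_def)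
  define K where "K = {0..1::real} \<times> ({-1/2..-\<eta>'} \<union> {\<eta>'..1/2})"
  have cK1: "compact K" unfolding K_def by (intro compact_Times compact_Un compact_Icc)
  have "(0, 1/2) \<in> K" using \<eta>' unfolding K_def by auto
  then have cK2: "K \<noteq> {}" by blast
  note cK = cK1 cK2
  have contg: "continuous_on UNIV g" using sj_basic[OF sj] by auto
  have ch: "continuous_on K (\<lambda>p. norm (g (fst p + snd p) - g (fst p)))"
  proof -
    have c1: "continuous_on UNIV (\<lambda>p::real\<times>real. g (fst p + snd p))"
      by (rule continuous_on_compose2[OF contg]) (auto intro!: continuous_intros)
    have c2: "continuous_on UNIV (\<lambda>p::real\<times>real. g (fst p))"
      by (rule continuous_on_compose2[OF contg]) (auto intro!: continuous_intros)
    show ?thesis by (rule continuous_on_subset[OF _ subset_UNIV]) (intro continuous_on_norm continuous_on_diff c1 c2)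
  qed
  obtain p0 where p0: "p0 \<in> K" "\<And>p. p \<in> K \<Longrightarrow> norm (g (fst p0 + snd p0) - g (fst p0)) \<le> norm (g (fst p + snd p) - g (fst p))"
    using continuous_attains_inf[OF cK ch] by blast
  define \<mu> where "\<mu> = norm (g (fst p0 + snd p0) - g (fst p0))"
  have \<mu>0: "\<mu> > 0"
  proof (rule ccontr)
    assume "\<not> \<mu> > 0"
    then have "g (fst p0 + snd p0) = g (fst p0)" using \<mu>_def by auto
    moreover have "0 < \<bar>(fst p0 + snd p0) - fst p0\<bar>" "\<bar>(fst p0 + snd p0) - fst p0\<bar> < 1"
      using p0(1) \<eta>' by (auto simp: K_def)
    ultimately show False using sj_inj[OF sj] by blast
  qed
  define \<kappa> where "\<kappa> = min (m/2) (2*\<mu>)"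
  have low: "\<kappa> * \<bar>s - t\<bar> \<le> norm (g s - g t)" if "s \<in> {0..1}" "\<bar>s - t\<bar> \<le> 1/2" for s t
  proof (cases "\<bar>s - t\<bar> < \<eta>")
    case True
    have "-(1/2) \<le> s - t \<and> s - t \<le> 1/2" using that(2) by (simp only: abs_le_iff) auto
    then have "-1 \<le> t \<and> t \<le> 2" using that(1) by auto
    then have "s \<in> I" "t \<in> I" using that by (auto simp: I_def)
    then have "m/2 * \<bar>s - t\<bar> \<le> norm (g s - g t)" using loc True by blast
    moreover have "\<kappa> * \<bar>s - t\<bar> \<le> m/2 * \<bar>s - t\<bar>" by (intro mult_right_mono) (auto simp: \<kappa>_def)
    ultimately show ?thesis by linarith
  next
    case False
    then have "(s, t - s) \<in> K" using that \<eta>' by (auto simp: K_def)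
    then have "\<mu> \<le> norm (g t - g s)" using p0(2)[of "(s, t - s)"] \<mu>_def by simp
    moreover have "\<kappa> * \<bar>s - t\<bar> \<le> 2*\<mu> * (1/2)"
      using that \<mu>0 by (intro mult_mono) (auto simp: \<kappa>_def)
    ultimately show ?thesis by (simp add: norm_minus_commute)
  qed
  have "m/2 > 0" "2*\<mu> > 0" using m0 \<mu>0 by auto
  then have "\<kappa> > 0" by (simp add: \<kappa>_def)
  moreover have "3*M0+1 > 0" using norm_ge_zero[of "G1 x2"] M0_def by linarith
  moreover have "\<forall>s t. s \<in> {-1..2} \<longrightarrow> t \<in> {-1..2} \<longrightarrow> norm (g s - g t) \<le> (3*M0+1) * \<bar>s - t\<bar>"
    using up unfolding I_def by blast
  moreover have "\<forall>s\<in>{0..1}. \<forall>t. \<bar>s - t\<bar> \<le> 1/2 \<longrightarrow> \<kappa> * \<bar>s - t\<bar> \<le> norm (g s - g t)"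
    using low by blast
  ultimately show ?thesis by blast
qed

lemma sj_simple_path:
  assumes sj: "smooth_jordan_param g"
  shows "simple_path g" "pathfinish g = pathstart g" "path_image g = g ` {0..1}"
proof -
  have c: "continuous_on UNIV g" using sj_basic[OF sj] by auto
  have p: "path g" unfolding path_def using continuous_on_subset[OF c] by blast
  have "loop_free g"
    unfolding loop_free_def
  proof (intro ballI impI)
    fix x y assume xy: "x \<in> {0..1}" "y \<in> {0..1}" "g x = g y"
    show "x = y \<or> x = 0 \<and> y = 1 \<or> x = 1 \<and> y = 0"
    proof (rule ccontr)
      assume n: "\<not> ?thesis"
      then have "0 < \<bar>x - y\<bar>" "\<bar>x - y\<bar> < 1" using xy by (auto simp: abs_if)
      then show False using sj_inj[OF sj xy(3)] by blast
    qed
  qed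
  then show "simple_path g" using p by (simp add: simple_path_def)
  show "pathfinish g = pathstart g" using sj_basic(6)[OF sj, of 0] by (simp add: pathfinish_def pathstart_def)
  show "path_image g = g ` {0..1}" by (simp add: path_image_def)
qed

lemma conn_helper:
  assumes "I \<inter> W \<subseteq> P \<union> Q" "Q \<subseteq> W" "P \<inter> I = {}" "connected Q" "Q \<subseteq> I \<or> Q \<inter> I = {}"
  shows "connected (I \<inter> W)"
proof -
  have "I \<inter> W = I \<inter> Q" using assms(1-3) by blast
  then show ?thesis using assms(4,5)
    by (metis connected_empty inf.absorb_iff2 inf_commute)
qed

lemma sj_Phi:
  assumes sj: "smooth_jordan_param g"
  defines "G1 \<equiv> (\<lambda>t. vector_derivative g (at t))"
  defines "\<Phi> \<equiv> (\<lambda>z. g (Re z) + \<i> * complex_of_real (Im z) * G1 (Re z))"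
  shows "\<exists>U' V \<psi>. open U' \<and> complex_of_real t0 \<in> U' \<and> open V \<and> homeomorphism U' V \<Phi> \<psi>"
    "continuous_on UNIV \<Phi>"
proof -
  define G2 where "G2 = (\<lambda>t. vector_derivative G1 (at t))"
  have gd: "\<And>t. (g has_vector_derivative G1 t) (at t)" using sj_basic[OF sj] G1_def by auto
  have g1d: "\<And>t. (G1 has_vector_derivative G2 t) (at t)" using sj_basic[OF sj] G1_def G2_def by auto
  have cG2: "continuous_on UNIV G2" using sj_basic[OF sj] G1_def G2_def by auto
  have cG1: "continuous_on UNIV G1" using sj_basic[OF sj] G1_def by auto
  have nz: "G1 t0 \<noteq> 0" using sj_basic[OF sj] G1_def by auto
  define A where "A = (\<lambda>z. G1 (Re z) + \<i> * complex_of_real (Im z) * G2 (Re z))"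
  define B where "B = (\<lambda>z. \<i> * G1 (Re z))"
  have bl: "\<And>z. bounded_linear (\<lambda>v. Re v *\<^sub>R A z + Im v *\<^sub>R B z)"
    by (intro bounded_linear_add bounded_linear_compose[OF bounded_linear_scaleR_left bounded_linear_Re]
        bounded_linear_compose[OF bounded_linear_scaleR_left bounded_linear_Im])
  define \<Phi>' where "\<Phi>' = (\<lambda>z. Blinfun (\<lambda>v. Re v *\<^sub>R A z + Im v *\<^sub>R B z))"
  have \<Phi>'a: "\<And>z v. blinfun_apply (\<Phi>' z) v = Re v *\<^sub>R A z + Im v *\<^sub>R B z"
    using bl by (simp add: \<Phi>'_def bounded_linear_Blinfun_apply)
  have d\<Phi>: "(\<Phi> has_derivative blinfun_apply (\<Phi>' z)) (at z)" for z
  proof -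
    have dRe: "((\<lambda>x. Re x) has_derivative (\<lambda>x. Re x)) (at z)"
      by (rule bounded_linear.has_derivative[OF bounded_linear_Re has_derivative_ident])
    have dIm: "((\<lambda>x. complex_of_real (Im x)) has_derivative (\<lambda>x. complex_of_real (Im x))) (at z)"
      by (rule bounded_linear.has_derivative[OF bounded_linear_of_real
            bounded_linear.has_derivative[OF bounded_linear_Im has_derivative_ident]])
    have dg: "((\<lambda>z. g (Re z)) has_derivative (\<lambda>v. Re v *\<^sub>R G1 (Re z))) (at z)"
      using has_derivative_compose[OF dRe, of g "\<lambda>h. h *\<^sub>R G1 (Re z)"] gd[of "Re z"]
      by (simp add: has_vector_derivative_def)
    have dG: "((\<lambda>z. G1 (Re z)) has_derivative (\<lambda>v. Re v *\<^sub>R G2 (Re z))) (at z)"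
      using has_derivative_compose[OF dRe, of G1 "\<lambda>h. h *\<^sub>R G2 (Re z)"] g1d[of "Re z"]
      by (simp add: has_vector_derivative_def)
    have "(\<Phi> has_derivative (\<lambda>v. Re v *\<^sub>R G1 (Re z) + ((\<i> * complex_of_real (Im z)) * (Re v *\<^sub>R G2 (Re z))
            + (\<i> * complex_of_real (Im v)) * G1 (Re z)))) (at z)"
      unfolding \<Phi>_def by (intro has_derivative_add dg has_derivative_mult has_derivative_mult_right dIm dG)
    moreover have "(\<lambda>v. Re v *\<^sub>R G1 (Re z) + ((\<i> * complex_of_real (Im z)) * (Re v *\<^sub>R G2 (Re z))
            + (\<i> * complex_of_real (Im v)) * G1 (Re z))) = blinfun_apply (\<Phi>' z)"
      by (rule ext) (simp add: \<Phi>'a A_def B_def algebra_simps scaleR_conv_of_real)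
    ultimately show ?thesis by simp
  qed
  have c1: "continuous_on UNIV (\<lambda>z. G1 (Re z))"
    by (rule continuous_on_compose2[OF cG1]) (auto intro!: continuous_intros)
  have c2: "continuous_on UNIV (\<lambda>z. G2 (Re z))"
    by (rule continuous_on_compose2[OF cG2]) (auto intro!: continuous_intros)
  have cA: "continuous_on UNIV A" using c1 c2 unfolding A_def by (auto intro!: continuous_intros)
  have cB: "continuous_on UNIV B" using c1 unfolding B_def by (auto intro!: continuous_intros)
  have c\<Phi>': "continuous_on UNIV \<Phi>'"
  proof (rule continuous_on_blinfun_componentwise)
    fix i :: complex assume "i \<in> Basis"
    then have "i = 1 \<or> i = \<i>" by (simp add: Basis_complex_def)
    then show "continuous_on UNIV (\<lambda>x. blinfun_apply (\<Phi>' x) i)" using cA cB by (auto simp: \<Phi>'a)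
  qed
  have bl2: "bounded_linear (\<lambda>v::complex. v / G1 t0)" by (rule bounded_linear_divide)
  define invf where "invf = Blinfun (\<lambda>v::complex. v / G1 t0)"
  have invfa: "\<And>v. blinfun_apply invf v = v / G1 t0" using bl2 by (simp add: invf_def bounded_linear_Blinfun_apply)
  have inv: "invf o\<^sub>L \<Phi>' (complex_of_real t0) = id_blinfun"
  proof (rule blinfun_eqI)
    fix v
    have "Re v *\<^sub>R G1 t0 + Im v *\<^sub>R (\<i> * G1 t0) = v * G1 t0"
      by (simp add: complex_eq_iff algebra_simps)
    then show "blinfun_apply (invf o\<^sub>L \<Phi>' (complex_of_real t0)) v = blinfun_apply id_blinfun v"
      using nz by (simp add: invfa \<Phi>'a A_def B_def)
  qed
  obtain U' V \<psi> \<psi>' where h: "open U'" "U' \<subseteq> UNIV" "complex_of_real t0 \<in> U'" "open V"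
      "\<Phi> (complex_of_real t0) \<in> V" "homeomorphism U' V \<Phi> \<psi>"
      "\<And>y. y \<in> V \<Longrightarrow> (\<psi> has_derivative \<psi>' y) (at y)"
      "\<And>y. y \<in> V \<Longrightarrow> \<psi>' y = inv (blinfun_apply (\<Phi>' (\<psi> y)))"
      "\<And>y. y \<in> V \<Longrightarrow> bij (blinfun_apply (\<Phi>' (\<psi> y)))"
    by (rule inverse_function_theorem[OF open_UNIV d\<Phi> c\<Phi>' UNIV_I inv], rule that)
  show "\<exists>U' V \<psi>. open U' \<and> complex_of_real t0 \<in> U' \<and> open V \<and> homeomorphism U' V \<Phi> \<psi>"
    using h(1,3,4,6) by blast
  have "\<And>z. isCont \<Phi> z" using d\<Phi> has_derivative_continuous by blast
  then show "continuous_on UNIV \<Phi>" by (simp add: continuous_at_imp_continuous_on)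
qed

lemma sj_local:
  assumes sj: "smooth_jordan_param g" and t0: "t0 \<in> {0..1}" and e: "\<epsilon> > 0"
  shows "\<exists>W. open W \<and> g t0 \<in> W \<and> W \<subseteq> ball (g t0) \<epsilon> \<and> connected (inside (g ` {0..1}) \<inter> W)"
proof -
  define G1 where "G1 = (\<lambda>t. vector_derivative g (at t))"
  define \<Phi> where "\<Phi> = (\<lambda>z. g (Re z) + \<i> * complex_of_real (Im z) * G1 (Re z))"
  define \<Gamma> where "\<Gamma> = g ` {0..1}"
  have "\<exists>U' V \<psi>. open U' \<and> complex_of_real t0 \<in> U' \<and> open V \<and> homeomorphism U' V \<Phi> \<psi>"
    using sj_Phi(1)[OF sj, of t0] by (simp add: \<Phi>_def G1_def)
  then obtain U' V \<psi> where h: "open U'" "complex_of_real t0 \<in> U'" "open V" "homeomorphism U' V \<Phi> \<psi>"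
    by blast
  have c\<Phi>: "continuous_on UNIV \<Phi>" using sj_Phi(2)[OF sj] by (simp add: \<Phi>_def G1_def)
  have injU: "inj_on \<Phi> U'"
    by (rule inj_on_inverseI[of U' \<psi>]) (rule homeomorphism_apply1[OF h(4)])
  define x0 where "x0 = complex_of_real t0"
  have \<Phi>x0: "\<Phi> x0 = g t0" by (simp add: \<Phi>_def x0_def)
  obtain r where r: "r > 0" "ball x0 r \<subseteq> U'" using h(1,2) x0_def open_contains_ball by blast
  define R where "R = (\<lambda>a. {z. t0 - a < Re z \<and> Re z < t0 + a \<and> -a < Im z \<and> Im z < a})"
  have Rball: "R a \<subseteq> ball x0 (2*a)" for a
  proof
    fix z assume "z \<in> R a"
    then have "\<bar>Re (z - x0)\<bar> < a" "\<bar>Im (z - x0)\<bar> < a" by (auto simp: R_def x0_def)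
    then have "cmod (z - x0) < 2*a" using cmod_le[of "z - x0"] by linarith
    then show "z \<in> ball x0 (2*a)" by (simp add: dist_norm norm_minus_commute)
  qed
  have Rmono: "R a \<subseteq> R b" if "a \<le> b" for a b using that by (auto simp: R_def)
  define a0 where "a0 = min (r/2) (1/4)"
  have a0: "a0 > 0" "a0 \<le> 1/4" using r by (auto simp: a0_def)
  have a0U: "R a0 \<subseteq> U'"
  proof -
    have "ball x0 (2*a0) \<subseteq> ball x0 r" by (rule subset_ball) (simp add: a0_def)
    then show ?thesis using Rball[of a0] r(2) by blast
  qed
  obtain \<kappa> M where \<kappa>: "\<kappa> > 0" and
    bl: "\<forall>s\<in>{0..1}. \<forall>t. \<bar>s - t\<bar> \<le> 1/2 \<longrightarrow> \<kappa> * \<bar>s - t\<bar> \<le> norm (g s - g t)"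
    using sj_bilip[OF sj] by blast
  define \<rho> where "\<rho> = \<kappa> * a0"
  have \<rho>: "\<rho> > 0" using \<kappa> a0 by (simp add: \<rho>_def)
  have "isCont \<Phi> x0" using c\<Phi> continuous_on_eq_continuous_at open_UNIV by blast
  moreover have me: "min \<epsilon> \<rho> > 0" using e \<rho> by simp
  ultimately obtain r2 where r2: "r2 > 0" "\<And>z. dist z x0 < r2 \<Longrightarrow> dist (\<Phi> z) (\<Phi> x0) < min \<epsilon> \<rho>"
    unfolding continuous_at_eps_delta by blast
  define a where "a = min a0 (r2/2)"
  have a: "a > 0" using a0 r2 by (simp add: a_def)
  have aU: "R a \<subseteq> U'" using Rmono[of a a0] a0U by (simp add: a_def)
  have aB: "\<Phi> z \<in> ball (g t0) (min \<epsilon> \<rho>)" if "z \<in> R a" for z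
  proof -
    have "dist x0 z < 2*a" using Rball[of a] that by auto
    then have "dist z x0 < r2" using r2 by (simp add: a_def dist_commute)
    then have "dist (\<Phi> z) (\<Phi> x0) < min \<epsilon> \<rho>" using r2(2) by blast
    then show ?thesis by (simp add: \<Phi>x0 dist_commute)
  qed
  define W where "W = \<Phi> ` R a"
  have oR: "open (R a)" unfolding R_def by (intro open_Collect_conj open_Collect_less continuous_intros)
  have oW: "open W"
  proof -
    have "openin (top_of_set U') (R a)" using open_subset[OF aU oR] .
    then have "openin (top_of_set V) (\<Phi> ` R a)" by (rule homeomorphism_imp_open_map[OF h(4)])
    then show ?thesis using h(3) W_def openin_open_trans by blast
  qed
  have x0R: "x0 \<in> R a" using a by (simp add: R_def x0_def)
  have gW: "g t0 \<in> W" using x0R \<Phi>x0 W_def by (metis image_eqI)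
  have WB: "W \<subseteq> ball (g t0) \<epsilon>" using aB unfolding W_def by fastforce
  have key: "Im z = 0" if z: "z \<in> R a" and zG: "\<Phi> z \<in> \<Gamma>" for z
  proof -
    obtain s where s: "s \<in> {0..1}" "\<Phi> z = g s" using zG \<Gamma>_def by auto
    obtain s' where s': "g s' = g s" "\<bar>s' - t0\<bar> \<le> 1/2"
    proof (cases "s - t0 > 1/2")
      case True then show ?thesis using that[of "s - 1"] sj_basic(7)[OF sj, of s] s t0 by (auto simp: abs_le_iff)
    next
      case False
      show ?thesis
      proof (cases "s - t0 < -1/2")
        case True then show ?thesis using that[of "s + 1"] sj_basic(6)[OF sj, of s] s t0 by (auto simp: abs_le_iff)
      next
        case False2: False
        have "\<bar>s - t0\<bar> \<le> 1/2" using False False2 unfolding abs_le_iff by linarith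
        then show ?thesis using that[of s] by simp
      qed
    qed
    have d: "dist (g t0) (\<Phi> z) < \<rho>" using aB[OF z] by auto
    show "Im z = 0"
    proof (cases "\<bar>s' - t0\<bar> < a0")
      case True
      have "complex_of_real s' \<in> R a0" using True a0 by (simp add: R_def abs_less_iff)
      then have in1: "complex_of_real s' \<in> U'" using a0U by blast
      have "\<Phi> (complex_of_real s') = g s'" by (simp add: \<Phi>_def)
      then have "\<Phi> (complex_of_real s') = \<Phi> z" using s s' by simp
      moreover have "z \<in> U'" using z aU by blast
      ultimately have "complex_of_real s' = z" using inj_onD[OF injU _ in1] by blast
      then show ?thesis by auto
    next
      case False
      have h1: "\<bar>t0 - s'\<bar> \<le> 1/2" using s'(2) by (simp add: abs_minus_commute)
      have "\<kappa> * \<bar>t0 - s'\<bar> \<le> norm (g t0 - g s')" using bl t0 h1 by blast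
      moreover have "\<kappa> * a0 \<le> \<kappa> * \<bar>t0 - s'\<bar>" using False \<kappa> by (simp add: abs_minus_commute)
      moreover have "norm (g t0 - g s') < \<kappa> * a0" using d s s' \<rho>_def by (simp add: dist_norm)
      ultimately show ?thesis by linarith
    qed
  qed
  define Rp where "Rp = R a \<inter> {z. Im z > 0}"
  define Rm where "Rm = R a \<inter> {z. Im z < 0}"
  have eq: "R a = {z. Re z > t0 - a} \<inter> {z. Re z < t0 + a} \<inter> {z. Im z > -a} \<inter> {z. Im z < a}"
    by (auto simp: R_def)
  have cvp: "convex Rp" unfolding Rp_def eq
    by (intro convex_Int convex_halfspace_Re_gt convex_halfspace_Re_lt convex_halfspace_Im_gt convex_halfspace_Im_lt)
  have cvm: "convex Rm" unfolding Rm_def eq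
    by (intro convex_Int convex_halfspace_Re_gt convex_halfspace_Re_lt convex_halfspace_Im_gt convex_halfspace_Im_lt)
  define P where "P = \<Phi> ` Rp"
  define Q where "Q = \<Phi> ` Rm"
  have cP: "connected P" unfolding P_def
    by (rule connected_continuous_image[OF continuous_on_subset[OF c\<Phi> subset_UNIV] convex_connected[OF cvp]])
  have cQ: "connected Q" unfolding Q_def
    by (rule connected_continuous_image[OF continuous_on_subset[OF c\<Phi> subset_UNIV] convex_connected[OF cvm]])
  have PG: "P \<inter> \<Gamma> = {}"
  proof -
    { fix z assume "z \<in> Rp" "\<Phi> z \<in> \<Gamma>"
      then have False using key[of z] by (auto simp: Rp_def) }
    then show ?thesis unfolding P_def by blast
  qed
  have QG: "Q \<inter> \<Gamma> = {}"
  proof -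
    { fix z assume "z \<in> Rm" "\<Phi> z \<in> \<Gamma>"
      then have False using key[of z] by (auto simp: Rm_def) }
    then show ?thesis unfolding Q_def by blast
  qed
  have PW: "P \<subseteq> W" "Q \<subseteq> W" by (auto simp: P_def Q_def W_def Rp_def Rm_def)
  have cover: "W - \<Gamma> \<subseteq> P \<union> Q"
  proof
    fix y assume y: "y \<in> W - \<Gamma>"
    then obtain z where z: "z \<in> R a" "y = \<Phi> z" by (auto simp: W_def)
    have "Im z \<noteq> 0"
    proof
      assume "Im z = 0"
      then have "y = g (Re z)" using z by (simp add: \<Phi>_def)
      then have "y \<in> g ` UNIV" by blast
      then have "y \<in> \<Gamma>" using sj_image[OF sj] \<Gamma>_def by simp
      then show False using y by blast
    qed
    then have "Im z > 0 \<or> Im z < 0" by linarith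
    then show "y \<in> P \<union> Q" using z by (auto simp: P_def Q_def Rp_def Rm_def)
  qed
  have pi: "path_image g = \<Gamma>" using sj_simple_path(3)[OF sj] \<Gamma>_def by simp
  note J0 = Jordan_inside_outside[OF sj_simple_path(1,2)[OF sj], unfolded pi]
  have J: "open (inside \<Gamma>)" "open (outside \<Gamma>)" "inside \<Gamma> \<inter> outside \<Gamma> = {}"
     "inside \<Gamma> \<union> outside \<Gamma> = - \<Gamma>" "frontier (outside \<Gamma>) = \<Gamma>"
    using J0 by (simp_all only:)
  have side: "S \<subseteq> inside \<Gamma> \<or> S \<subseteq> outside \<Gamma>" if "connected S" "S \<inter> \<Gamma> = {}" for S
  proof -
    have "S \<subseteq> inside \<Gamma> \<union> outside \<Gamma>" using that(2) J by blast
    moreover have "inside \<Gamma> \<inter> outside \<Gamma> \<inter> S = {}" using J by blast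
    ultimately have "inside \<Gamma> \<inter> S = {} \<or> outside \<Gamma> \<inter> S = {}"
      using connectedD[OF that(1)] J by blast
    then show ?thesis using \<open>S \<subseteq> inside \<Gamma> \<union> outside \<Gamma>\<close> by blast
  qed
  have "g t0 \<in> \<Gamma>" using t0 \<Gamma>_def by blast
  then have "g t0 \<in> closure (outside \<Gamma>)" using J(5) frontier_closures by blast
  then have "W \<inter> outside \<Gamma> \<noteq> {}" using open_Int_closure_eq_empty[OF oW] gW by blast
  then obtain y where y: "y \<in> W" "y \<in> outside \<Gamma>" by blast
  have "y \<notin> \<Gamma>" using y J by blast
  then have yPQ: "y \<in> P \<or> y \<in> Q" using cover y by blast
  have iW: "inside \<Gamma> \<inter> W \<subseteq> P \<union> Q" using cover J by blast
  have conn: "connected (inside \<Gamma> \<inter> W)"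
  proof (cases "y \<in> P")
    case True
    have "P \<inter> inside \<Gamma> = {}" using True y side[OF cP PG] J by blast
    moreover have "Q \<subseteq> inside \<Gamma> \<or> Q \<inter> inside \<Gamma> = {}" using side[OF cQ QG] J by blast
    ultimately show ?thesis using conn_helper[of "inside \<Gamma>" W P Q] iW PW cQ by blast
  next
    case False
    then have yQ: "y \<in> Q" using yPQ by blast
    have "Q \<inter> inside \<Gamma> = {}" using yQ y side[OF cQ QG] J by blast
    moreover have "P \<subseteq> inside \<Gamma> \<or> P \<inter> inside \<Gamma> = {}" using side[OF cP PG] J by blast
    moreover have "inside \<Gamma> \<inter> W \<subseteq> Q \<union> P" using iW by blast
    ultimately show ?thesis using conn_helper[of "inside \<Gamma>" W Q P] PW cP by blast
  qed
  show ?thesis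
    by (rule exI[of _ W]) (use oW gW WB conn in \<open>simp add: \<Gamma>_def\<close>)
qed

lemma bv_local:
  assumes sj: "smooth_jordan_param g" and \<Gamma>: "\<Gamma> = g ` {0..1}" and \<Omega>: "\<Omega> = inside \<Gamma>"
    and cw: "continuous_on \<Omega> w" and sq0: "\<forall>z\<in>\<Omega>. (w z)^2 = z^2 - 1"
    and \<tau>: "\<tau> \<in> \<Gamma>" "\<tau>^2 \<noteq> 1"
  shows "\<exists>W L'. open W \<and> \<tau> \<in> W \<and> continuous_on W L' \<and>
      (\<forall>t\<in>\<Gamma> \<inter> W. Lim (at t within \<Omega>) w = L' t \<and> (L' t)^2 = t^2 - 1)"
proof -
  have sq: "\<And>z. z \<in> \<Omega> \<Longrightarrow> (w z)^2 = z^2 - 1" using sq0 by blast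
  have pi: "path_image g = \<Gamma>" using sj_simple_path(3)[OF sj] \<Gamma> by simp
  note J0 = Jordan_inside_outside[OF sj_simple_path(1,2)[OF sj], unfolded pi]
  have Jf: "frontier (inside \<Gamma>) = \<Gamma>" using J0 by (simp only:)
  have Jd: "inside \<Gamma> \<inter> \<Gamma> = {}" by (rule inside_no_overlap)
  have clo: "t \<in> closure \<Omega>" "t \<notin> \<Omega>" if "t \<in> \<Gamma>" for t
  proof -
    have "t \<in> frontier \<Omega>" using that Jf \<Omega> by simp
    then show "t \<in> closure \<Omega>" by (metis DiffD1 frontier_def)
    show "t \<notin> \<Omega>" using that Jd \<Omega> by blast
  qed
  have ntriv: "\<not> trivial_limit (at t within \<Omega>)" if "t \<in> \<Gamma>" for t
  proof -
    have "t islimpt \<Omega>" using clo[OF that] by (auto simp: closure_def)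
    then show ?thesis using trivial_limit_within by blast
  qed
  obtain t0 where t0: "t0 \<in> {0..1}" "\<tau> = g t0" using \<tau>(1) \<Gamma> by auto
  have tn: "\<tau> \<noteq> 1" "\<tau> \<noteq> -1" using \<tau>(2) by auto
  define \<epsilon> where "\<epsilon> = min (dist \<tau> 1) (dist \<tau> (-1))"
  have \<epsilon>: "\<epsilon> > 0" using tn by (simp add: \<epsilon>_def)
  define B where "B = ball \<tau> \<epsilon>"
  have nz: "z^2 - 1 \<noteq> 0" if "z \<in> B" for z
  proof -
    have "z \<noteq> 1" "z \<noteq> -1" using that by (auto simp: B_def \<epsilon>_def)
    then show ?thesis by (simp add: power2_eq_1_iff)
  qed
  have cB: "continuous_on B (\<lambda>z. z^2 - 1)" by (intro continuous_intros)
  have ctB: "contractible B" unfolding B_def by (rule convex_imp_contractible[OF convex_ball])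
  obtain q where q: "continuous_on B q" "\<And>z. z \<in> B \<Longrightarrow> z^2 - 1 = (q z)^2"
    using continuous_sqrt_on_contractible[OF cB ctB nz] by blast
  have "\<exists>W. open W \<and> \<tau> \<in> W \<and> W \<subseteq> B \<and> connected (\<Omega> \<inter> W)"
    using sj_local[OF sj t0(1) \<epsilon>] by (simp add: \<Omega> \<Gamma> B_def t0(2))
  then obtain W where W: "open W" "\<tau> \<in> W" "W \<subseteq> B" "connected (\<Omega> \<inter> W)" by blast
  have "\<Omega> \<inter> W \<noteq> {}" using open_Int_closure_eq_empty[OF W(1), of \<Omega>] W(2) clo(1)[OF \<tau>(1)] by blast
  then obtain z0 where z0: "z0 \<in> \<Omega> \<inter> W" by blast
  have qnz: "q z \<noteq> 0" if "z \<in> B" for z using q(2)[OF that] nz[OF that] by auto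
  define f where "f = (\<lambda>z. w z / q z)"
  have cf: "continuous_on (\<Omega> \<inter> W) f" unfolding f_def
    using continuous_on_subset[OF cw, of "\<Omega> \<inter> W"] continuous_on_subset[OF q(1), of "\<Omega> \<inter> W"] W(3) qnz
    by (intro continuous_on_divide) auto
  have f1: "f z = 1 \<or> f z = -1" if "z \<in> \<Omega> \<inter> W" for z
  proof -
    have zB: "z \<in> B" using that W(3) by blast
    have "(f z)^2 = (w z)^2 / (q z)^2" by (simp add: f_def power_divide)
    also have "\<dots> = 1" using sq[of z] q(2)[OF zB] nz[OF zB] that by simp
    finally show ?thesis by (simp add: power2_eq_1_iff)
  qed
  have "f ` (\<Omega> \<inter> W) \<subseteq> {1, -1}" using f1 by auto
  then have "finite (f ` (\<Omega> \<inter> W))" using finite_subset by blast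
  then have "f constant_on (\<Omega> \<inter> W)" using continuous_finite_range_constant[OF W(4) cf] by blast
  then obtain \<sigma> where \<sigma>: "\<And>z. z \<in> \<Omega> \<inter> W \<Longrightarrow> f z = \<sigma>" unfolding constant_on_def by blast
  have \<sigma>1: "\<sigma>^2 = 1" using f1[OF z0] \<sigma>[OF z0] by auto
  have weq: "w z = \<sigma> * q z" if "z \<in> \<Omega> \<inter> W" for z
  proof -
    have "q z \<noteq> 0" using qnz W(3) that by blast
    then show ?thesis using \<sigma>[OF that] by (auto simp: f_def field_simps)
  qed
  define L' where "L' = (\<lambda>z. \<sigma> * q z)"
  have cL: "continuous_on W L'" unfolding L'_def using continuous_on_subset[OF q(1) W(3)] by (intro continuous_intros)
  show ?thesis
  proof (intro exI[of _ W] exI[of _ L'] conjI ballI)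
    show "open W" "\<tau> \<in> W" "continuous_on W L'" by fact+
    fix t assume t: "t \<in> \<Gamma> \<inter> W"
    have "isCont L' t" using cL W(1) t continuous_on_eq_continuous_at by blast
    then have "(L' \<longlongrightarrow> L' t) (at t)" by (simp add: isCont_def)
    then have l1: "(L' \<longlongrightarrow> L' t) (at t within \<Omega>)" by (rule tendsto_mono[OF at_le[OF subset_UNIV]])
    have "\<forall>x\<in>W. x \<noteq> t \<longrightarrow> x \<in> \<Omega> \<longrightarrow> L' x = w x" using weq L'_def by auto
    then have ev: "eventually (\<lambda>x. L' x = w x) (at t within \<Omega>)"
      unfolding eventually_at_topological using W(1) t by blast
    have "(w \<longlongrightarrow> L' t) (at t within \<Omega>)" using l1 tendsto_cong[OF ev] by simp
    then show "Lim (at t within \<Omega>) w = L' t" using tendsto_Lim ntriv t by blast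
    have "t \<in> B" using t W(3) by blast
    then show "(L' t)^2 = t^2 - 1" using q(2) \<sigma>1 by (simp add: L'_def power_mult_distrib)
  qed
qed

lemma bv:
  assumes sj: "smooth_jordan_param g" and \<Gamma>: "\<Gamma> = g ` {0..1}" and \<Omega>: "\<Omega> = inside \<Gamma>"
    and cw: "continuous_on \<Omega> w" and sq0: "\<forall>z\<in>\<Omega>. (w z)^2 = z^2 - 1"
  shows "\<And>\<tau>. \<tau> \<in> \<Gamma> \<Longrightarrow> \<tau>^2 \<noteq> 1 \<Longrightarrow> (Lim (at \<tau> within \<Omega>) w)^2 = \<tau>^2 - 1"
    and "continuous_on {\<tau> \<in> \<Gamma>. \<tau>^2 \<noteq> 1} (\<lambda>\<tau>. Lim (at \<tau> within \<Omega>) w)"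
proof -
  show "(Lim (at \<tau> within \<Omega>) w)^2 = \<tau>^2 - 1" if tt: "\<tau> \<in> \<Gamma>" "\<tau>^2 \<noteq> 1" for \<tau>
  proof -
    obtain W L' where W: "open W" "\<tau> \<in> W" "continuous_on W L'" "\<forall>t\<in>\<Gamma> \<inter> W. Lim (at t within \<Omega>) w = L' t \<and> (L' t)^2 = t^2 - 1"
      using bv_local[OF sj \<Gamma> \<Omega> cw sq0 tt] by (elim exE conjE)
    have "\<tau> \<in> \<Gamma> \<inter> W" using tt(1) W(2) by blast
    then have "Lim (at \<tau> within \<Omega>) w = L' \<tau> \<and> (L' \<tau>)^2 = \<tau>^2 - 1" using W(4) by blast
    then show ?thesis by simp
  qed
  define S where "S = {\<tau> \<in> \<Gamma>. \<tau>^2 \<noteq> 1}"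
  define L where "L = (\<lambda>\<tau>. Lim (at \<tau> within \<Omega>) w)"
  have "continuous (at \<tau> within S) L" if "\<tau> \<in> S" for \<tau>
  proof -
    have tt: "\<tau> \<in> \<Gamma>" "\<tau>^2 \<noteq> 1" using that S_def by auto
    obtain W L' where W: "open W" "\<tau> \<in> W" "continuous_on W L'"
      "\<forall>t\<in>\<Gamma> \<inter> W. Lim (at t within \<Omega>) w = L' t \<and> (L' t)^2 = t^2 - 1"
      using bv_local[OF sj \<Gamma> \<Omega> cw sq0 tt] by (elim exE conjE)
    have "isCont L' \<tau>" using W(1-3) continuous_on_eq_continuous_at by blast
    then have "(L' \<longlongrightarrow> L' \<tau>) (at \<tau>)" by (simp add: isCont_def)
    then have l1: "(L' \<longlongrightarrow> L' \<tau>) (at \<tau> within S)" by (rule tendsto_mono[OF at_le[OF subset_UNIV]])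
    have "\<forall>x\<in>W. x \<noteq> \<tau> \<longrightarrow> x \<in> S \<longrightarrow> L' x = L x"
    proof (intro ballI impI)
      fix x assume "x \<in> W" "x \<noteq> \<tau>" "x \<in> S"
      then have "x \<in> \<Gamma> \<inter> W" using S_def by blast
      then show "L' x = L x" using W(4) L_def by simp
    qed
    then have ev: "eventually (\<lambda>x. L' x = L x) (at \<tau> within S)"
      unfolding eventually_at_topological using W(1,2) by blast
    have "(L \<longlongrightarrow> L' \<tau>) (at \<tau> within S)" using l1 tendsto_cong[OF ev] by simp
    moreover have "L' \<tau> = L \<tau>" using W(2,4) tt L_def by simp
    ultimately show ?thesis by (simp add: continuous_within)
  qed
  then show "continuous_on {\<tau> \<in> \<Gamma>. \<tau>^2 \<noteq> 1} (\<lambda>\<tau>. Lim (at \<tau> within \<Omega>) w)"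
    unfolding S_def[symmetric] L_def[symmetric] by (simp add: continuous_on_eq_continuous_within)
qed

lemma sj_shift:
  assumes sj: "smooth_jordan_param g" and s: "s \<in> {0..1}" and t: "t \<in> {0..1}"
  obtains s' where "g s' = g s" "\<bar>s' - t\<bar> \<le> 1/2"
proof (cases "s - t > 1/2")
  case True then show ?thesis using that[of "s - 1"] sj_basic(7)[OF sj, of s] s t by (auto simp: abs_le_iff)
next
  case False
  show ?thesis
  proof (cases "s - t < -1/2")
    case True then show ?thesis using that[of "s + 1"] sj_basic(6)[OF sj, of s] s t by (auto simp: abs_le_iff)
  next
    case False2: False
    have "\<bar>s - t\<bar> \<le> 1/2" using False False2 unfolding abs_le_iff by linarith
    then show ?thesis using that[of s] by simp
  qed
qed

lemma contradiction_perp: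
  fixes v p t1 :: complex
  assumes "Re v = 0" "v^2 = (p^2 - 1) * cnj (t1^2 - 1)" "cmod (p^2 - t1^2) < cmod (1 - t1^2) / 2"
    and "t1^2 \<noteq> 1"
  shows False
proof -
  define r where "r = cmod (1 - t1^2)"
  have r0: "r > 0" using assms(4) by (simp add: r_def)
  have rr: "(t1^2 - 1) * cnj (t1^2 - 1) = complex_of_real (r^2)"
    using complex_norm_square[of "t1^2 - 1"] by (simp add: r_def norm_minus_commute)
  have alg: "(p^2 - 1) * X - (t1^2 - 1) * X = (p^2 - t1^2) * X" for X :: complex
    by (simp add: algebra_simps)
  have "v^2 - complex_of_real (r^2) = (p^2 - 1) * cnj (t1^2 - 1) - (t1^2 - 1) * cnj (t1^2 - 1)"
    using assms(2) rr by simp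
  then have "v^2 - complex_of_real (r^2) = (p^2 - t1^2) * cnj (t1^2 - 1)"
    using alg by simp
  then have e1: "cmod (v^2 - complex_of_real (r^2)) = cmod (p^2 - t1^2) * cmod (cnj (t1^2 - 1))"
    by (simp only: norm_mult)
  have e2: "cmod (cnj (t1^2 - 1)) = r" by (simp only: complex_mod_cnj) (simp add: r_def norm_minus_commute)
  have "cmod (v^2 - complex_of_real (r^2)) = cmod (p^2 - t1^2) * r" using e1 e2 by simp
  also have "\<dots> < r / 2 * r" using assms(3) r0 by (simp add: r_def)
  finally have c1: "cmod (v^2 - complex_of_real (r^2)) < r / 2 * r" .
  have "Re (v^2) = -((Im v)^2)" using assms(1) by (simp add: power2_eq_square)
  then have "Re (complex_of_real (r^2) - v^2) \<ge> r^2" by simp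
  moreover have "Re (complex_of_real (r^2) - v^2) \<le> cmod (v^2 - complex_of_real (r^2))"
    by (metis complex_Re_le_cmod norm_minus_commute)
  ultimately have "r^2 < r / 2 * r" using c1 by linarith
  then show False using r0 by (simp add: power2_eq_square)
qed

lemma sign_consistent:
  assumes sj: "smooth_jordan_param g" and \<Gamma>: "\<Gamma> = g ` {0..1}"
    and Lsq: "\<And>\<tau>. \<tau> \<in> \<Gamma> \<Longrightarrow> \<tau>^2 \<noteq> 1 \<Longrightarrow> (L \<tau>)^2 = \<tau>^2 - 1"
    and Lc: "continuous_on {\<tau>\<in>\<Gamma>. \<tau>^2 \<noteq> 1} L"
    and \<kappa>: "\<kappa> > 0" and M: "M > 0" and K: "K > 0"
    and up: "\<forall>s t. s \<in> {-1..2} \<longrightarrow> t \<in> {-1..2} \<longrightarrow> norm (g s - g t) \<le> M * \<bar>s - t\<bar>"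
    and low: "\<forall>s\<in>{0..1}. \<forall>t. \<bar>s - t\<bar> \<le> 1/2 \<longrightarrow> \<kappa> * \<bar>s - t\<bar> \<le> norm (g s - g t)"
    and Kb: "\<forall>p\<in>\<Gamma>. \<forall>q\<in>\<Gamma>. cmod (p^2 - q^2) \<le> K * cmod (p - q)"
    and t1: "\<tau>1 \<in> \<Gamma>" "\<tau>1^2 \<noteq> 1" and t2: "\<tau>2 \<in> \<Gamma>"
    and small: "K * M * cmod (\<tau>1 - \<tau>2) < \<kappa> * cmod (1 - \<tau>1^2) / 2"
  shows "Re (L \<tau>2 * cnj (L \<tau>1)) > 0"
proof -
  define r1 where "r1 = cmod (1 - \<tau>1^2)"
  define \<delta> where "\<delta> = cmod (\<tau>1 - \<tau>2)"
  obtain s1 where s1: "s1 \<in> {0..1}" "\<tau>1 = g s1" using t1 \<Gamma> by auto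
  obtain s2 where s2: "s2 \<in> {0..1}" "\<tau>2 = g s2" using t2 \<Gamma> by auto
  obtain s2' where s2': "g s2' = g s2" "\<bar>s2' - s1\<bar> \<le> 1/2" using sj_shift[OF sj s2(1) s1(1)] by blast
  have "\<kappa> * \<bar>s1 - s2'\<bar> \<le> norm (g s1 - g s2')" using low s1(1) s2'(2) by (simp add: abs_minus_commute)
  then have ks: "\<kappa> * \<bar>s1 - s2'\<bar> \<le> \<delta>" using s1 s2 s2' by (simp add: \<delta>_def)
  define A where "A = g ` closed_segment s1 s2'"
  have cg: "continuous_on UNIV g" using sj_basic[OF sj] by auto
  have conA: "connected A" unfolding A_def
    by (rule connected_continuous_image[OF continuous_on_subset[OF cg subset_UNIV] connected_segment])
  have t1A: "\<tau>1 \<in> A" using s1 by (auto simp: A_def)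
  have t2A: "\<tau>2 \<in> A" using s2 s2' unfolding A_def by (metis ends_in_segment(2) image_eqI)
  have near: "p \<in> \<Gamma> \<and> cmod (p^2 - \<tau>1^2) < r1 / 2" if pA: "p \<in> A" for p
  proof -
    obtain u where u: "u \<in> closed_segment s1 s2'" "p = g u" using pA unfolding A_def by blast
    have "p \<in> g ` UNIV" using u by blast
    then have pG: "p \<in> \<Gamma>" using sj_image[OF sj] \<Gamma> by simp
    have d1: "\<bar>u - s1\<bar> \<le> \<bar>s2' - s1\<bar>" using segment_bound1[OF u(1)] by simp
    have uI: "u \<in> {-1..2}" using u(1) s1(1) s2'(2) unfolding closed_segment_eq_real_ivl
      by (auto simp: abs_le_iff split: if_splits)
    have "cmod (p - \<tau>1) \<le> M * \<bar>u - s1\<bar>" using up uI s1 u(2) by auto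
    also have "\<dots> \<le> M * \<bar>s2' - s1\<bar>" using d1 M by simp
    finally have e1: "cmod (p - \<tau>1) \<le> M * \<bar>s2' - s1\<bar>" .
    have "cmod (p^2 - \<tau>1^2) \<le> K * cmod (p - \<tau>1)" using Kb pG t1(1) by blast
    also have "\<dots> \<le> K * (M * \<bar>s2' - s1\<bar>)" using e1 K by simp
    finally have e2: "\<kappa> * cmod (p^2 - \<tau>1^2) \<le> \<kappa> * (K * (M * \<bar>s2' - s1\<bar>))" using \<kappa> by simp
    have "\<kappa> * (K * (M * \<bar>s2' - s1\<bar>)) = K * M * (\<kappa> * \<bar>s1 - s2'\<bar>)" by (simp add: abs_minus_commute)
    also have "\<dots> \<le> K * M * \<delta>" using ks K M by simp
    also have "\<dots> < \<kappa> * r1 / 2" using small by (simp add: \<delta>_def r1_def)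
    finally have "\<kappa> * cmod (p^2 - \<tau>1^2) < \<kappa> * (r1 / 2)" using e2 by simp
    then show ?thesis using pG \<kappa> by simp
  qed
  have AS: "A \<subseteq> {\<tau>\<in>\<Gamma>. \<tau>^2 \<noteq> 1}"
  proof
    fix p assume pA: "p \<in> A"
    have "p^2 \<noteq> 1"
    proof
      assume "p^2 = 1"
      then have "cmod (1 - \<tau>1^2) < r1 / 2" using near[OF pA] by simp
      moreover have "r1 > 0" using t1(2) by (simp add: r1_def)
      ultimately show False by (simp add: r1_def)
    qed
    then show "p \<in> {\<tau>\<in>\<Gamma>. \<tau>^2 \<noteq> 1}" using near[OF pA] by simp
  qed
  define h where "h = (\<lambda>p. Re (L p * cnj (L \<tau>1)))"
  have ch: "continuous_on A h" unfolding h_def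
    using continuous_on_subset[OF Lc AS] by (intro continuous_intros)
  have L1nz: "L \<tau>1 \<noteq> 0" using Lsq[OF t1] t1(2) by auto
  have h1: "h \<tau>1 > 0"
  proof -
    have "h \<tau>1 = Re (complex_of_real ((cmod (L \<tau>1))^2))" unfolding h_def by (simp only: complex_norm_square)
    then show ?thesis using L1nz by simp
  qed
  have hnz: "h p \<noteq> 0" if pA: "p \<in> A" for p
  proof
    assume h0: "h p = 0"
    have pS: "p \<in> \<Gamma>" "p^2 \<noteq> 1" using AS pA by auto
    have "(L p * cnj (L \<tau>1))^2 = (p^2 - 1) * cnj (\<tau>1^2 - 1)"
      using Lsq[OF pS] Lsq[OF t1] by (simp add: power_mult_distrib flip: complex_cnj_power)
    then show False
      using contradiction_perp[of "L p * cnj (L \<tau>1)" p \<tau>1] h0 near[OF pA] t1(2) by (simp add: h_def r1_def)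
  qed
  show ?thesis
  proof (rule ccontr)
    assume "\<not> ?thesis"
    then have "h \<tau>2 \<le> 0" by (simp add: h_def)
    have "connected (h ` A)" by (rule connected_continuous_image[OF ch conA])
    then have "{h \<tau>2 .. h \<tau>1} \<subseteq> h ` A" using connected_contains_Icc t1A t2A by blast
    then have "0 \<in> h ` A" using \<open>h \<tau>2 \<le> 0\<close> h1 by auto
    then show False using hnz by auto
  qed
qed

lemma norm_add_sq:
  fixes x y :: complex
  shows "(cmod (x + y))^2 = (cmod x)^2 + (cmod y)^2 + 2 * Re (y * cnj x)"
  unfolding cmod_power2 by (simp add: power2_eq_square algebra_simps)

lemma key_bound:
  assumes sj: "smooth_jordan_param g" and \<Gamma>: "\<Gamma> = g ` {0..1}"
    and Lsq: "\<And>\<tau>. \<tau> \<in> \<Gamma> \<Longrightarrow> \<tau>^2 \<noteq> 1 \<Longrightarrow> (L \<tau>)^2 = \<tau>^2 - 1"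
    and Lc: "continuous_on {\<tau>\<in>\<Gamma>. \<tau>^2 \<noteq> 1} L"
  shows "\<exists>C0>0. \<forall>\<tau>1 \<tau>2. \<tau>1 \<in> \<Gamma> \<longrightarrow> \<tau>2 \<in> \<Gamma> \<longrightarrow> \<tau>1^2 \<noteq> 1 \<longrightarrow> \<tau>2^2 \<noteq> 1 \<longrightarrow>
      cmod (1 - \<tau>1^2) \<le> cmod (1 - \<tau>2^2) \<longrightarrow> cmod (L \<tau>1 - L \<tau>2) * cmod (L \<tau>1) \<le> C0 * cmod (\<tau>1 - \<tau>2)"
proof -
  obtain \<kappa> M where \<kappa>: "\<kappa> > 0" and M: "M > 0"
    and up: "\<forall>s t. s \<in> {-1..2} \<longrightarrow> t \<in> {-1..2} \<longrightarrow> norm (g s - g t) \<le> M * \<bar>s - t\<bar>"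
    and low: "\<forall>s\<in>{0..1}. \<forall>t. \<bar>s - t\<bar> \<le> 1/2 \<longrightarrow> \<kappa> * \<bar>s - t\<bar> \<le> norm (g s - g t)"
    using sj_bilip[OF sj] by blast
  have cg: "continuous_on UNIV g" using sj_basic[OF sj] by auto
  have "compact \<Gamma>" using \<Gamma> compact_continuous_image[OF continuous_on_subset[OF cg subset_UNIV] compact_Icc] by simp
  then obtain R where R: "\<forall>x\<in>\<Gamma>. cmod x \<le> R" using compact_imp_bounded bounded_iff by blast
  define K where "K = 2 * max R 0 + 1"
  have K: "K > 0" by (simp add: K_def add_pos_nonneg)
  have Kb: "\<forall>p\<in>\<Gamma>. \<forall>q\<in>\<Gamma>. cmod (p^2 - q^2) \<le> K * cmod (p - q)"
  proof (intro ballI)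
    fix p q assume pq: "p \<in> \<Gamma>" "q \<in> \<Gamma>"
    have "p^2 - q^2 = (p + q) * (p - q)" by (simp add: power2_eq_square algebra_simps)
    then have e: "cmod (p^2 - q^2) = cmod (p + q) * cmod (p - q)" by (simp add: norm_mult)
    have "cmod p \<le> max R 0" "cmod q \<le> max R 0" using R pq by force+
    then have "cmod (p + q) \<le> K" using norm_triangle_ineq[of p q] K_def by linarith
    then show "cmod (p^2 - q^2) \<le> K * cmod (p - q)" using e by (simp add: mult_right_mono)
  qed
  define c where "c = \<kappa> / (2 * K * M)"
  have c: "c > 0" using \<kappa> K M by (simp add: c_def)
  define C0 where "C0 = 2 / c + 2 * K"
  have C0: "C0 > 0" using c K by (simp add: C0_def add_pos_pos)
  show ?thesis
  proof (intro exI[of _ C0] conjI allI impI)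
    show "C0 > 0" by (rule C0)
    fix \<tau>1 \<tau>2 assume t: "\<tau>1 \<in> \<Gamma>" "\<tau>2 \<in> \<Gamma>" "\<tau>1^2 \<noteq> 1" "\<tau>2^2 \<noteq> 1"
      "cmod (1 - \<tau>1^2) \<le> cmod (1 - \<tau>2^2)"
    define L1 where "L1 = L \<tau>1"
    define L2 where "L2 = L \<tau>2"
    define a where "a = cmod L1"
    define b where "b = cmod L2"
    define \<delta> where "\<delta> = cmod (\<tau>1 - \<tau>2)"
    define r1 where "r1 = cmod (1 - \<tau>1^2)"
    define r2 where "r2 = cmod (1 - \<tau>2^2)"
    have a2: "a^2 = r1" using Lsq[OF t(1,3)]
      by (simp add: a_def r1_def L1_def flip: norm_power) (simp add: norm_minus_commute)
    have b2: "b^2 = r2" using Lsq[OF t(2,4)]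
      by (simp add: b_def r2_def L2_def flip: norm_power) (simp add: norm_minus_commute)
    have "r1 > 0" using t(3) by (simp add: r1_def)
    then have "a^2 > 0" using a2 by simp
    then have "a \<noteq> 0" by auto
    then have a0: "a > 0" by (simp add: a_def)
    have b0: "b \<ge> 0" by (simp add: b_def)
    have d0: "\<delta> \<ge> 0" by (simp add: \<delta>_def)
    have "a^2 \<le> b^2" using a2 b2 t(5) r1_def r2_def by simp
    then have ab: "a \<le> b" using b0 by (rule power2_le_imp_le)
    have r2b: "r2 \<le> r1 + K * \<delta>"
    proof -
      have "1 - \<tau>2^2 = (1 - \<tau>1^2) + (\<tau>1^2 - \<tau>2^2)" by simp
      then have "r2 \<le> r1 + cmod (\<tau>1^2 - \<tau>2^2)" unfolding r1_def r2_def by (metis norm_triangle_ineq)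
      moreover have "cmod (\<tau>1^2 - \<tau>2^2) \<le> K * \<delta>" using Kb t(1,2) by (simp add: \<delta>_def)
      ultimately show ?thesis by linarith
    qed
    have diff: "cmod (L1 - L2) * cmod (L1 + L2) \<le> K * \<delta>"
    proof -
      have "(L1 - L2) * (L1 + L2) = L1^2 - L2^2" by (simp add: power2_eq_square algebra_simps)
      also have "\<dots> = \<tau>1^2 - \<tau>2^2" using Lsq[OF t(1,3)] Lsq[OF t(2,4)] by (simp add: L1_def L2_def)
      finally have "cmod (L1 - L2) * cmod (L1 + L2) = cmod (\<tau>1^2 - \<tau>2^2)" by (metis norm_mult)
      also have "\<dots> \<le> K * \<delta>" using Kb t(1,2) by (simp add: \<delta>_def)
      finally show ?thesis .
    qed
    have "cmod (L1 - L2) * a \<le> C0 * \<delta>"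
    proof (cases "\<delta> \<ge> c * a^2")
      case True
      have aa: "a^2 \<le> \<delta> / c" using True c by (simp add: pos_le_divide_eq mult.commute)
      have bb: "b^2 \<le> \<delta> / c + K * \<delta>" using b2 a2 r2b aa by linarith
      have "(a * b)^2 = a^2 * b^2" by (simp add: power_mult_distrib)
      also have "\<dots> \<le> (\<delta> / c) * (\<delta> / c + K * \<delta>)"
        by (rule mult_mono[OF aa bb]) (use c d0 in auto)
      also have "\<dots> \<le> (\<delta> / c + K * \<delta>) * (\<delta> / c + K * \<delta>)"
        by (rule mult_right_mono) (use c d0 K in auto)
      also have "\<dots> = (\<delta> / c + K * \<delta>)^2" by (simp add: power2_eq_square)
      finally have "(a * b)^2 \<le> (\<delta> / c + K * \<delta>)^2" .
      then have abd: "a * b \<le> \<delta> / c + K * \<delta>" by (rule power2_le_imp_le) (use c d0 K in auto)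
      have "cmod (L1 - L2) \<le> a + b" unfolding a_def b_def by (rule norm_triangle_ineq4)
      then have "cmod (L1 - L2) * a \<le> (a + b) * a" using a0 by (simp add: mult_right_mono)
      also have "\<dots> = a^2 + a * b" by (simp add: power2_eq_square algebra_simps)
      also have "\<dots> \<le> 2 * (\<delta> / c) + K * \<delta>" using aa abd by linarith
      also have "\<dots> \<le> C0 * \<delta>" using d0 K by (simp add: C0_def algebra_simps mult_right_mono)
      finally show ?thesis .
    next
      case False
      have "K * M * \<delta> < K * M * (c * a^2)" using False K M by simp
      also have "K * M * (c * a^2) = \<kappa> * r1 / 2" using K M a2 by (simp add: c_def field_simps)
      finally have small: "K * M * cmod (\<tau>1 - \<tau>2) < \<kappa> * cmod (1 - \<tau>1^2) / 2" by (simp add: \<delta>_def r1_def)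
      have pos: "Re (L \<tau>2 * cnj (L \<tau>1)) > 0"
        by (rule sign_consistent[OF sj \<Gamma> Lsq Lc \<kappa> M K up low Kb t(1) t(3) t(2) small])
      have "(cmod (L1 + L2))^2 = a^2 + b^2 + 2 * Re (L2 * cnj L1)"
        by (simp add: norm_add_sq a_def b_def)
      then have "a^2 \<le> (cmod (L1 + L2))^2" using pos b0 by (simp add: L1_def L2_def)
      then have "a \<le> cmod (L1 + L2)" by (rule power2_le_imp_le) simp
      then have "cmod (L1 - L2) * a \<le> cmod (L1 - L2) * cmod (L1 + L2)" by (simp add: mult_left_mono)
      also have "\<dots> \<le> K * \<delta>" by (rule diff)
      also have "\<dots> \<le> C0 * \<delta>"
      proof -
        have "2 / c > 0" using c by simp
        then have "K \<le> C0" using K by (simp add: C0_def)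
        then show ?thesis using d0 by (rule mult_right_mono)
      qed
      finally show ?thesis .
    qed
    then show "cmod (L \<tau>1 - L \<tau>2) * cmod (L \<tau>1) \<le> C0 * cmod (\<tau>1 - \<tau>2)"
      by (simp add: L1_def L2_def a_def \<delta>_def)
  qed
qed

lemma pow_diff_bound:
  fixes x y :: complex
  assumes "cmod x \<le> A" "cmod y \<le> A"
  shows "cmod (x^(Suc n) - y^(Suc n)) \<le> real (Suc n) * A^n * cmod (x - y)"
proof (induction n)
  case 0 then show ?case by simp
next
  case (Suc n)
  have A0: "A \<ge> 0" using assms(1) norm_ge_zero order_trans by blast
  have e: "x^(Suc (Suc n)) - y^(Suc (Suc n)) = x^(Suc n) * (x - y) + (x^(Suc n) - y^(Suc n)) * y"
    by (simp add: algebra_simps)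
  have pm: "cmod x ^ Suc n \<le> A ^ Suc n" by (rule power_mono[OF assms(1) norm_ge_zero])
  have "cmod (x^(Suc n) * (x - y)) = cmod x ^ Suc n * cmod (x - y)" by (simp only: norm_mult norm_power)
  also have "\<dots> \<le> A^(Suc n) * cmod (x - y)" by (rule mult_right_mono[OF pm norm_ge_zero])
  finally have n1: "cmod (x^(Suc n) * (x - y)) \<le> A^(Suc n) * cmod (x - y)" .
  have "cmod ((x^(Suc n) - y^(Suc n)) * y) = cmod (x^(Suc n) - y^(Suc n)) * cmod y" by (simp add: norm_mult)
  also have "\<dots> \<le> (real (Suc n) * A^n * cmod (x - y)) * A"
    by (rule mult_mono[OF Suc.IH assms(2)]) (use A0 in auto)
  also have "\<dots> = real (Suc n) * A^(Suc n) * cmod (x - y)" by (simp add: algebra_simps)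
  finally have n2: "cmod ((x^(Suc n) - y^(Suc n)) * y) \<le> real (Suc n) * A^(Suc n) * cmod (x - y)" .
  have "cmod (x^(Suc (Suc n)) - y^(Suc (Suc n))) \<le> cmod (x^(Suc n) * (x - y)) + cmod ((x^(Suc n) - y^(Suc n)) * y)"
    unfolding e by (rule norm_triangle_ineq)
  also have "\<dots> \<le> A^(Suc n) * cmod (x - y) + real (Suc n) * A^(Suc n) * cmod (x - y)" using n1 n2 by linarith
  also have "\<dots> = real (Suc (Suc n)) * A^(Suc n) * cmod (x - y)" by (simp add: algebra_simps)
  finally show ?case .
qed

theorem lemma1:
  fixes f :: "complex \<Rightarrow> complex" and g :: "real \<Rightarrow> complex"
    and \<Delta> \<Gamma> \<Omega> :: "complex set" and w :: "complex \<Rightarrow> complex"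
  assumes arc: "analytic_arc_param f (-1) 1"
    and \<Delta>_def: "\<Delta> = f ` complex_of_real ` {0..1}"
    and curve: "smooth_jordan_param g"
    and \<Gamma>_def: "\<Gamma> = g ` {0..1}"
    and sub: "\<Delta> \<subseteq> \<Gamma>"
    and \<Omega>_def: "\<Omega> = inside \<Gamma>"
    and left: "lies_left_of_arc \<Omega> f"
    and w_hol: "w holomorphic_on (- \<Delta>)"
    and w_sq: "\<forall>z. z \<notin> \<Delta> \<longrightarrow> (w z)\<^sup>2 = z\<^sup>2 - 1"
    and w_inf: "((\<lambda>z. w z / z) \<longlongrightarrow> 1) at_infinity"
  shows "\<exists>C1::real. \<forall>N::int. \<forall>\<tau>1 \<tau>2.
           N \<ge> -1 \<longrightarrow> \<tau>1 \<in> \<Gamma> \<longrightarrow> \<tau>2 \<in> \<Gamma> \<longrightarrow> \<tau>1 \<noteq> \<tau>2 \<longrightarrow>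
           \<tau>1\<^sup>2 \<noteq> 1 \<longrightarrow> \<tau>2\<^sup>2 \<noteq> 1 \<longrightarrow>
           cmod (1 - \<tau>1\<^sup>2) \<le> cmod (1 - \<tau>2\<^sup>2) \<longrightarrow>
           cmod (1 / (Lim (at \<tau>1 within \<Omega>) w) powi N - 1 / (Lim (at \<tau>2 within \<Omega>) w) powi N)
             \<le> C1 * \<bar>real_of_int N\<bar> *
                max (1 / cmod (1 - \<tau>1\<^sup>2) powr (1 + real_of_int N / 2))
                    (1 / cmod (1 - \<tau>2\<^sup>2) powr (1 + real_of_int N / 2)) *
                cmod (\<tau>1 - \<tau>2)"
proof -
  define L where "L = (\<lambda>\<tau>. Lim (at \<tau> within \<Omega>) w)"
  have \<Omega>\<Gamma>: "\<Omega> \<inter> \<Gamma> = {}" using \<Omega>_def inside_no_overlap by blast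
  have \<Omega>\<Delta>: "\<Omega> \<subseteq> - \<Delta>" using \<Omega>\<Gamma> sub by blast
  have cw: "continuous_on \<Omega> w"
    using continuous_on_subset[OF holomorphic_on_imp_continuous_on[OF w_hol] \<Omega>\<Delta>] .
  have sq0: "\<forall>z\<in>\<Omega>. (w z)^2 = z^2 - 1" using w_sq \<Omega>\<Delta> by blast
  have Lsq: "\<And>\<tau>. \<tau> \<in> \<Gamma> \<Longrightarrow> \<tau>^2 \<noteq> 1 \<Longrightarrow> (L \<tau>)^2 = \<tau>^2 - 1"
    using bv(1)[OF curve \<Gamma>_def \<Omega>_def cw sq0] L_def by blast
  have Lc: "continuous_on {\<tau>\<in>\<Gamma>. \<tau>^2 \<noteq> 1} L"
    using bv(2)[OF curve \<Gamma>_def \<Omega>_def cw sq0] unfolding L_def .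
  obtain C0 where C0: "C0 > 0" and KB: "\<forall>\<tau>1 \<tau>2. \<tau>1 \<in> \<Gamma> \<longrightarrow> \<tau>2 \<in> \<Gamma> \<longrightarrow> \<tau>1^2 \<noteq> 1 \<longrightarrow> \<tau>2^2 \<noteq> 1 \<longrightarrow>
      cmod (1 - \<tau>1^2) \<le> cmod (1 - \<tau>2^2) \<longrightarrow> cmod (L \<tau>1 - L \<tau>2) * cmod (L \<tau>1) \<le> C0 * cmod (\<tau>1 - \<tau>2)"
    using key_bound[OF curve \<Gamma>_def Lsq Lc] by blast
  show ?thesis
  proof (intro exI[of _ C0] allI impI)
    fix N :: int and \<tau>1 \<tau>2
    assume h: "N \<ge> -1" "\<tau>1 \<in> \<Gamma>" "\<tau>2 \<in> \<Gamma>" "\<tau>1 \<noteq> \<tau>2" "\<tau>1^2 \<noteq> 1" "\<tau>2^2 \<noteq> 1"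
      "cmod (1 - \<tau>1^2) \<le> cmod (1 - \<tau>2^2)"
    define L1 where "L1 = L \<tau>1"
    define L2 where "L2 = L \<tau>2"
    define a where "a = cmod L1"
    define b where "b = cmod L2"
    define \<delta> where "\<delta> = cmod (\<tau>1 - \<tau>2)"
    define r1 where "r1 = cmod (1 - \<tau>1^2)"
    define r2 where "r2 = cmod (1 - \<tau>2^2)"
    have a2: "a^2 = r1" using Lsq[OF h(2,5)]
      by (simp add: a_def r1_def L1_def flip: norm_power) (simp add: norm_minus_commute)
    have b2: "b^2 = r2" using Lsq[OF h(3,6)]
      by (simp add: b_def r2_def L2_def flip: norm_power) (simp add: norm_minus_commute)
    have "r1 > 0" using h(5) by (simp add: r1_def)
    then have "a^2 > 0" using a2 by simp
    then have "a \<noteq> 0" by auto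
    then have a0: "a > 0" by (simp add: a_def)
    have b0: "b \<ge> 0" by (simp add: b_def)
    have "a^2 \<le> b^2" using a2 b2 h(7) r1_def r2_def by simp
    then have ab: "a \<le> b" using b0 by (rule power2_le_imp_le)
    have d0: "\<delta> > 0" using h(4) by (simp add: \<delta>_def)
    have kb: "cmod (L1 - L2) * a \<le> C0 * \<delta>" using KB h by (simp add: L1_def L2_def a_def \<delta>_def)
    then have kb': "cmod (L1 - L2) \<le> C0 * \<delta> / a" using a0 by (simp add: pos_le_divide_eq)
    have L1nz: "L1 \<noteq> 0" "L2 \<noteq> 0" using a0 ab by (auto simp: a_def b_def)
    have rpow: "r1 powr (1 + real_of_int N / 2) = a powr (2 + real_of_int N)"
    proof -
      have "r1 = a powr 2" using a2 a0 by (simp add: powr_realpow)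
      then have "r1 powr (1 + real_of_int N / 2) = a powr (2 * (1 + real_of_int N / 2))"
        by (simp add: powr_powr)
      also have "2 * (1 + real_of_int N / 2) = 2 + real_of_int N" by simp
      finally show ?thesis .
    qed
    define p where "p = 1 / r1 powr (1 + real_of_int N / 2)"
    have pmax: "p \<le> max (1 / r1 powr (1 + real_of_int N / 2)) (1 / r2 powr (1 + real_of_int N / 2))"
      by (simp add: p_def)
    have RHS: "C0 * \<bar>real_of_int N\<bar> * p * \<delta> \<le> C0 * \<bar>real_of_int N\<bar> *
                max (1 / r1 powr (1 + real_of_int N / 2)) (1 / r2 powr (1 + real_of_int N / 2)) * \<delta>"
      using pmax C0 d0 by (intro mult_right_mono mult_left_mono) auto
    have LHS: "cmod (1 / L1 powi N - 1 / L2 powi N) \<le> C0 * \<bar>real_of_int N\<bar> * p * \<delta>"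
    proof (cases "N = 0")
      case True then show ?thesis by simp
    next
      case N0: False
      show ?thesis
      proof (cases "N = -1")
        case True
        have "p = 1 / a" using rpow True a0 by (simp add: p_def powr_minus_divide)
        then have "C0 * \<bar>real_of_int N\<bar> * p * \<delta> = C0 * \<delta> / a" using True by simp
        moreover have "1 / L1 powi N - 1 / L2 powi N = L1 - L2" using True by (simp add: power_int_minus divide_inverse)
        ultimately show ?thesis using kb' by simp
      next
        case False
        then have "N \<ge> 1" using h(1) N0 by linarith
        then have "N = int (Suc (nat N - 1))" by simp
        then obtain n where n: "N = int (Suc n)" by blast
        have pw: "1 / L powi N = (1 / L)^(Suc n)" for L :: complex
          by (simp only: n power_int_of_nat) (simp add: power_one_over)
        have x1: "cmod (1 / L1) = 1 / a" "cmod (1 / L2) = 1 / b" by (simp_all add: a_def b_def norm_divide)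
        have ba: "1 / b \<le> 1 / a" using ab a0 by (simp add: frac_le)
        have "cmod ((1 / L1)^(Suc n) - (1 / L2)^(Suc n)) \<le> real (Suc n) * (1/a)^n * cmod (1 / L1 - 1 / L2)"
          by (rule pow_diff_bound) (use x1 ba in auto)
        moreover have "cmod (1 / L1 - 1 / L2) \<le> cmod (L1 - L2) / a^2"
        proof -
          have "1 / L1 - 1 / L2 = (L2 - L1) / (L1 * L2)" using L1nz by (simp add: field_simps)
          then have "cmod (1 / L1 - 1 / L2) = cmod (L1 - L2) / (a * b)"
            by (simp add: norm_divide norm_mult a_def b_def norm_minus_commute)
          also have "\<dots> \<le> cmod (L1 - L2) / (a * a)"
            using a0 ab by (intro divide_left_mono mult_left_mono) auto
          finally show ?thesis by (simp add: power2_eq_square)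
        qed
        ultimately have "cmod ((1 / L1)^(Suc n) - (1 / L2)^(Suc n)) \<le> real (Suc n) * (1/a)^n * (cmod (L1 - L2) / a^2)"
          by (meson mult_left_mono order_trans zero_le_divide_1_iff of_nat_0_le_iff
              mult_nonneg_nonneg zero_le_power a0 less_imp_le)
        also have "\<dots> \<le> real (Suc n) * (1/a)^n * ((C0 * \<delta> / a) / a^2)"
          using kb' a0 by (intro mult_left_mono divide_right_mono) auto
        also have "\<dots> = C0 * real (Suc n) * (1 / a^(n+3)) * \<delta>"
          using a0 by (simp add: field_simps power_add power_one_over power2_eq_square power3_eq_cube)
        also have "\<dots> = C0 * \<bar>real_of_int N\<bar> * p * \<delta>"
        proof -
          have "a powr (2 + real_of_int N) = a^(n+3)" using a0 n
            by (simp add: powr_realpow[symmetric] algebra_simps)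
          then show ?thesis using rpow n by (simp add: p_def)
        qed
        finally show ?thesis using pw by simp
      qed
    qed
    show "cmod (1 / (Lim (at \<tau>1 within \<Omega>) w) powi N - 1 / (Lim (at \<tau>2 within \<Omega>) w) powi N)
             \<le> C0 * \<bar>real_of_int N\<bar> *
                max (1 / cmod (1 - \<tau>1\<^sup>2) powr (1 + real_of_int N / 2))
                    (1 / cmod (1 - \<tau>2\<^sup>2) powr (1 + real_of_int N / 2)) *
                cmod (\<tau>1 - \<tau>2)"
      using LHS RHS by (simp add: L_def L1_def L2_def r1_def r2_def \<delta>_def)
  qed
qed

end
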